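(* Let $\mathbf{i}=(i_1,\dots,i_r)$, $\mathbf{j}=(j_1,\dots,j_r)$ be sequences of positive integers with equal sums $N$, and suppose $g=\det M(\mathbf{i};\mathbf{j})$ is nonzero and irreducible. Then every indeterminate in each of the blocks $A^k$, $k=1,\dots,r$, appears in the top homogeneous component of $g$.
   Context: $M(\mathbf{i};\mathbf{j})$ is the $N\times N$ matrix whose rows are divided into blocks of sizes $i_1,\dots,i_r$ (top to bottom) and columns into blocks of sizes $j_r,\dots,j_1$ (left to right; the block of size $j_t$ is column block $t$). Row block $s$ has an $i_s\times j_s$ matrix $A^s$ of indeterminates in column block $s$; for $s\ge 2$ the matrix $I_{i_s,j_{s-1}}$ in column block $s-1$; zeros in column blocks $t<s-1$; and indeterminates in column blocks $t>s$. $I_{c,d}$ is the $c\times d$ matrix with $1$s on its main diagonal and $0$s elsewhere. All indeterminates are distinct. The top homogeneous component of a polynomial is its homogeneous component of highest degree. *)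

theory Defs
  imports "HOL-Library.Poly_Mapping" "HOL-Computational_Algebra.Factorial_Ring"
    "Jordan_Normal_Form.Determinant"
begin

text \<open>Multivariate polynomials over a field, with indeterminates indexed by matrix
  positions (row, column) (0-based).\<close>

type_synonym 'a mpol = "((nat \<times> nat) \<Rightarrow>\<^sub>0 nat) \<Rightarrow>\<^sub>0 'a"

definition Var :: "nat \<times> nat \<Rightarrow> 'a::comm_ring_1 mpol" where
  "Var x = Poly_Mapping.single (Poly_Mapping.single x 1) 1"

definition mon_deg :: "((nat \<times> nat) \<Rightarrow>\<^sub>0 nat) \<Rightarrow> nat" where
  "mon_deg m = (\<Sum>x\<in>Poly_Mapping.keys m. Poly_Mapping.lookup m x)"

definition total_degree :: "'a::zero mpol \<Rightarrow> nat" where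
  "total_degree p = Max (insert 0 (mon_deg ` Poly_Mapping.keys p))"

text \<open>The top homogeneous component of p is the sum of the terms of p whose monomial has
  degree total_degree p; its support (set of monomials) is top_support p. An indeterminate
  x appears in the top homogeneous component iff some monomial of that support has
  positive exponent at x.\<close>
definition top_support :: "'a::zero mpol \<Rightarrow> ((nat \<times> nat) \<Rightarrow>\<^sub>0 nat) set" where
  "top_support p = {m \<in> Poly_Mapping.keys p. mon_deg m = total_degree p}"

definition appears_in_top :: "nat \<times> nat \<Rightarrow> 'a::zero mpol \<Rightarrow> bool" where
  "appears_in_top x p \<longleftrightarrow> (\<exists>m\<in>top_support p. Poly_Mapping.lookup m x > 0)"

text \<open>Block structure. \<open>is\<close> = [i_1,...,i_r], \<open>js\<close> = [j_1,...,j_r].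
  Row block s (1-based) occupies rows sum(take (s-1) is) ..< sum(take s is).
  Column block t (1-based) has size j_t; the blocks are ordered r,...,1 left to right,
  so column block t occupies columns sum(drop t js) ..< sum(drop (t-1) js).\<close>

definition row_block :: "nat list \<Rightarrow> nat \<Rightarrow> nat" where
  "row_block is a = (LEAST s. a < sum_list (take s is))"

definition col_block :: "nat list \<Rightarrow> nat \<Rightarrow> nat" where
  "col_block js b = (LEAST t. sum_list (drop t js) \<le> b)"

text \<open>Entry (a,b) of M(i;j): row block s, column block t.
  t \<ge> s: indeterminate (A^s when t = s, free indeterminates when t > s);
  t = s-1: the matrix I_{i_s, j_{s-1}} (1 on the local main diagonal);
  t < s-1: zero.\<close>
definition Mentry :: "nat list \<Rightarrow> nat list \<Rightarrow> nat \<Rightarrow> nat \<Rightarrow> 'a::comm_ring_1 mpol" where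
  "Mentry is js a b =
     (let s = row_block is a; t = col_block js b;
          a' = a - sum_list (take (s - 1) is); b' = b - sum_list (drop t js)
      in if s \<le> t then Var (a, b)
         else if t + 1 = s \<and> a' = b' then 1 else 0)"

definition Mmat :: "nat list \<Rightarrow> nat list \<Rightarrow> 'a::comm_ring_1 mpol mat" where
  "Mmat is js = mat (sum_list is) (sum_list js) (\<lambda>(a, b). Mentry is js a b)"

end

theory Submission
  imports Defs "HOL-Library.Product_Lexorder"
begin

definition ro :: "nat list \<Rightarrow> nat \<Rightarrow> nat" where "ro xs s = sum_list (take s xs)"
definition co :: "nat list \<Rightarrow> nat \<Rightarrow> nat" where "co ys t = sum_list (drop t ys)"

lemma sum_list_take_le: "sum_list (take k (zs::nat list)) \<le> sum_list zs"
  by (metis append_take_drop_id sum_list_append le_add1)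
lemma sum_list_drop_le: "sum_list (drop k (zs::nat list)) \<le> sum_list zs"
  by (metis append_take_drop_id sum_list_append le_add2)

lemma ro_mono: "s \<le> s' \<Longrightarrow> ro xs s \<le> ro xs s'"
  unfolding ro_def using sum_list_take_le[of s "take s' xs"] by (simp add: min_def)

lemma ro_0[simp]: "ro xs 0 = 0" by (simp add: ro_def)
lemma ro_len: "length xs \<le> s \<Longrightarrow> ro xs s = sum_list xs" by (simp add: ro_def)
lemma ro_Suc: "s < length xs \<Longrightarrow> ro xs (Suc s) = ro xs s + xs ! s"
  by (simp add: ro_def take_Suc_conv_app_nth)

lemma ro_strict: assumes "\<forall>x\<in>set xs. 0 < x" "s < s'" "s' \<le> length xs"
  shows "ro xs s < ro xs s'"
proof -
  have "ro xs s \<le> ro xs (s' - 1)" using assms by (intro ro_mono) auto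
  also have "\<dots> < ro xs (Suc (s' - 1))"
    using assms by (subst ro_Suc) (auto simp: nth_mem)
  finally show ?thesis using assms by simp
qed

lemma co_anti: "t \<le> t' \<Longrightarrow> co ys t' \<le> co ys t"
  unfolding co_def using sum_list_drop_le[of "t' - t" "drop t ys"] by simp

lemma co_0[simp]: "co ys 0 = sum_list ys" by (simp add: co_def)
lemma co_len: "length ys \<le> t \<Longrightarrow> co ys t = 0" by (simp add: co_def)
lemma co_Suc: "t < length ys \<Longrightarrow> co ys t = co ys (Suc t) + ys ! t"
  unfolding co_def by (simp add: Cons_nth_drop_Suc[symmetric])

lemma rb_char:
  assumes "a < sum_list xs"
  shows "1 \<le> row_block xs a \<and> row_block xs a \<le> length xs \<and>
         ro xs (row_block xs a - 1) \<le> a \<and> a < ro xs (row_block xs a)"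
proof -
  let ?P = "\<lambda>s. a < sum_list (take s xs)"
  have ex: "?P (length xs)" using assms by simp
  have 1: "?P (row_block xs a)" unfolding row_block_def by (rule LeastI[of ?P, OF ex])
  have 2: "row_block xs a \<le> length xs" unfolding row_block_def by (rule Least_le[of ?P, OF ex])
  have 3: "row_block xs a \<noteq> 0"
  proof assume "row_block xs a = 0" then show False using 1 by simp qed
  have 4: "\<not> ?P (row_block xs a - 1)"
    using 3 unfolding row_block_def by (intro not_less_Least) auto
  show ?thesis using 1 2 3 4 by (auto simp: ro_def)
qed

lemma rb_eq:
  assumes "1 \<le> s" "s \<le> length xs" "ro xs (s - 1) \<le> a" "a < ro xs s"
  shows "row_block xs a = s"
  unfolding row_block_def
proof (rule Least_equality)
  show "a < sum_list (take s xs)" using assms by (simp add: ro_def)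
next
  fix y assume h: "a < sum_list (take y xs)"
  show "s \<le> y"
  proof (rule ccontr)
    assume "\<not> s \<le> y" then have "ro xs y \<le> ro xs (s - 1)" by (intro ro_mono) auto
    then show False using h assms by (simp add: ro_def)
  qed
qed

lemma rb_ge:
  assumes "a < sum_list xs" "1 \<le> s"
  shows "s \<le> row_block xs a \<longleftrightarrow> ro xs (s - 1) \<le> a"
proof
  assume "s \<le> row_block xs a"
  then show "ro xs (s - 1) \<le> a" using rb_char[OF assms(1)] ro_mono[of "s - 1" "row_block xs a - 1" xs]
    by (meson diff_le_mono le_trans)
next
  assume h: "ro xs (s - 1) \<le> a"
  show "s \<le> row_block xs a"
  proof (rule ccontr)
    assume "\<not> s \<le> row_block xs a"
    then have "ro xs (row_block xs a) \<le> ro xs (s - 1)" by (intro ro_mono) auto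
    then show False using h rb_char[OF assms(1)] by auto
  qed
qed

lemma cb_char:
  assumes "b < sum_list ys"
  shows "1 \<le> col_block ys b \<and> col_block ys b \<le> length ys \<and>
         co ys (col_block ys b) \<le> b \<and> b < co ys (col_block ys b - 1)"
proof -
  let ?P = "\<lambda>t. sum_list (drop t ys) \<le> b"
  have ex: "?P (length ys)" by simp
  have 1: "?P (col_block ys b)" unfolding col_block_def by (rule LeastI[of ?P, OF ex])
  have 2: "col_block ys b \<le> length ys" unfolding col_block_def by (rule Least_le[of ?P, OF ex])
  have 3: "col_block ys b \<noteq> 0"
  proof assume "col_block ys b = 0" then show False using 1 assms by simp qed
  have 4: "\<not> ?P (col_block ys b - 1)"
    using 3 unfolding col_block_def by (intro not_less_Least) auto
  show ?thesis using 1 2 3 4 by (auto simp: co_def)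
qed

lemma cb_eq:
  assumes "1 \<le> t" "t \<le> length ys" "co ys t \<le> b" "b < co ys (t - 1)"
  shows "col_block ys b = t"
  unfolding col_block_def
proof (rule Least_equality)
  show "sum_list (drop t ys) \<le> b" using assms by (simp add: co_def)
next
  fix y assume h: "sum_list (drop y ys) \<le> b"
  show "t \<le> y"
  proof (rule ccontr)
    assume "\<not> t \<le> y" then have "co ys (t - 1) \<le> co ys y" by (intro co_anti) auto
    then show False using h assms by (simp add: co_def)
  qed
qed

lemma cb_ge:
  assumes "b < sum_list ys" "1 \<le> t"
  shows "t \<le> col_block ys b \<longleftrightarrow> b < co ys (t - 1)"
proof
  assume "t \<le> col_block ys b"
  then show "b < co ys (t - 1)" using cb_char[OF assms(1)] co_anti[of "t - 1" "col_block ys b - 1" ys]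
    by (meson diff_le_mono order_less_le_trans)
next
  assume h: "b < co ys (t - 1)"
  show "t \<le> col_block ys b"
  proof (rule ccontr)
    assume "\<not> t \<le> col_block ys b"
    then have "co ys (t - 1) \<le> co ys (col_block ys b)" by (intro co_anti) auto
    then show False using h cb_char[OF assms(1)] by auto
  qed
qed

definition isvar :: "nat list \<Rightarrow> nat list \<Rightarrow> nat \<Rightarrow> nat \<Rightarrow> bool" where
  "isvar xs ys a b \<longleftrightarrow> row_block xs a \<le> col_block ys b"
definition isone :: "nat list \<Rightarrow> nat list \<Rightarrow> nat \<Rightarrow> nat \<Rightarrow> bool" where
  "isone xs ys a b \<longleftrightarrow> col_block ys b + 1 = row_block xs a \<and>
     a - ro xs (row_block xs a - 1) = b - co ys (col_block ys b)"

lemma one_not_var: "isone xs ys a b \<Longrightarrow> \<not> isvar xs ys a b"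
  by (auto simp: isone_def isvar_def)

lemma Mentry_cases: "Mentry xs ys a b =
  (if isvar xs ys a b then Var (a, b) else if isone xs ys a b then 1 else 0)"
  unfolding Mentry_def Let_def isvar_def isone_def ro_def co_def by auto

lemma one_unique:
  assumes "b < sum_list ys" "b' < sum_list ys" "isone xs ys a b" "isone xs ys a b'"
  shows "b = b'"
proof -
  have t: "col_block ys b = col_block ys b'" using assms(3,4) by (simp add: isone_def)
  show ?thesis using assms cb_char[OF assms(1)] cb_char[OF assms(2)] t
    by (simp add: isone_def) linarith
qed

definition monoE :: "(nat \<times> nat) set \<Rightarrow> ((nat \<times> nat) \<Rightarrow>\<^sub>0 nat)" where
  "monoE E = Abs_poly_mapping (\<lambda>x. if x \<in> E then 1 else 0)"

lemma lookup_mono: "finite E \<Longrightarrow> Poly_Mapping.lookup (monoE E) x = (if x \<in> E then 1 else 0)"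
proof -
  assume "finite E"
  moreover have "{x. (if x \<in> E then 1 else 0::nat) \<noteq> 0} = E" by auto
  ultimately have fin: "finite {x. (if x \<in> E then 1 else 0::nat) \<noteq> 0}" by simp
  have "Poly_Mapping.lookup (monoE E) = (\<lambda>x. if x \<in> E then 1 else 0)"
    unfolding monoE_def using fin by (subst lookup_Abs_poly_mapping) auto
  then show ?thesis by simp
qed

lemma keys_mono: "finite E \<Longrightarrow> Poly_Mapping.keys (monoE E) = E"
  by (auto simp: in_keys_iff lookup_mono split: if_splits)

lemma mon_deg_mono: "finite E \<Longrightarrow> mon_deg (monoE E) = card E"
  by (simp add: mon_deg_def keys_mono lookup_mono)

lemma monoE_inj: "finite E \<Longrightarrow> finite E' \<Longrightarrow> monoE E = monoE E' \<Longrightarrow> E = E'"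
  by (metis keys_mono)


lemma monoE_insert: "finite E \<Longrightarrow> e \<notin> E \<Longrightarrow> monoE (insert e E) = Poly_Mapping.single e 1 + monoE E"
  by (rule poly_mapping_eqI) (auto simp: lookup_mono lookup_add lookup_single when_def)

definition Eset :: "nat list \<Rightarrow> nat list \<Rightarrow> (nat \<Rightarrow> nat) \<Rightarrow> nat set \<Rightarrow> (nat \<times> nat) set" where
  "Eset xs ys p A = {(a, p a) | a. a \<in> A \<and> isvar xs ys a (p a)}"

lemma finite_Eset: "finite A \<Longrightarrow> finite (Eset xs ys p A)"
  unfolding Eset_def by (rule finite_subset[of _ "(\<lambda>a. (a, p a)) ` A"]) auto

lemma card_Eset: "finite A \<Longrightarrow> card (Eset xs ys p A) = card {a \<in> A. isvar xs ys a (p a)}"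
proof -
  have "Eset xs ys p A = (\<lambda>a. (a, p a)) ` {a \<in> A. isvar xs ys a (p a)}"
    unfolding Eset_def by auto
  then show ?thesis by (simp add: card_image inj_on_def)
qed

lemma prod_entries:
  assumes "finite A"
  shows "(\<Prod>a\<in>A. Mentry xs ys a (p a) :: 'a::comm_ring_1 mpol) =
    (if (\<forall>a\<in>A. isvar xs ys a (p a) \<or> isone xs ys a (p a))
     then Poly_Mapping.single (monoE (Eset xs ys p A)) 1 else 0)"
  using assms
proof (induction A rule: finite_induct)
  case empty
  then show ?case by (simp add: Eset_def monoE_def)
next
  case (insert x A)
  have nin: "(x, p x) \<notin> Eset xs ys p A" using insert(2) by (auto simp: Eset_def)
  show ?case
  proof (cases "isvar xs ys x (p x)")
    case True
    have E: "Eset xs ys p (insert x A) = insert (x, p x) (Eset xs ys p A)"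
      using True by (auto simp: Eset_def)
    show ?thesis using True insert
      by (auto simp: E Mentry_cases Var_def mult_single monoE_insert[OF finite_Eset nin])
  next
    case False
    have E: "Eset xs ys p (insert x A) = Eset xs ys p A"
      using False by (auto simp: Eset_def)
    show ?thesis using False insert by (auto simp: E Mentry_cases)
  qed
qed

definition nzp :: "nat list \<Rightarrow> nat list \<Rightarrow> (nat \<Rightarrow> nat) \<Rightarrow> bool" where
  "nzp xs ys p \<longleftrightarrow> (\<forall>a\<in>{0..<sum_list xs}. isvar xs ys a (p a) \<or> isone xs ys a (p a))"

abbreviation EE :: "nat list \<Rightarrow> nat list \<Rightarrow> (nat \<Rightarrow> nat) \<Rightarrow> (nat \<times> nat) set" where
  "EE xs ys p \<equiv> Eset xs ys p {0..<sum_list xs}"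

lemma det_expand:
  assumes "sum_list xs = sum_list ys"
  shows "det (Mmat xs ys :: 'a::comm_ring_1 mpol mat) =
    (\<Sum>p\<in>{p. p permutes {0..<sum_list xs}}. signof p *
       (if nzp xs ys p then Poly_Mapping.single (monoE (EE xs ys p)) 1 else 0))"
proof -
  let ?N = "sum_list xs"
  have car: "(Mmat xs ys :: 'a mpol mat) \<in> carrier_mat ?N ?N"
    using assms by (simp add: Mmat_def)
  show ?thesis
    unfolding det_def'[OF car]
  proof (rule sum.cong[OF refl])
    fix p assume "p \<in> {p. p permutes {0..<?N}}"
    then have p: "p permutes {0..<?N}" by simp
    have "(\<Prod>i = 0..<?N. (Mmat xs ys :: 'a mpol mat) $$ (i, p i)) =
          (\<Prod>i = 0..<?N. Mentry xs ys i (p i))"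
    proof (rule prod.cong[OF refl])
      fix i assume i: "i \<in> {0..<?N}"
      then have "p i \<in> {0..<?N}" using p by (simp add: permutes_in_image)
      then show "(Mmat xs ys :: 'a mpol mat) $$ (i, p i) = Mentry xs ys i (p i)"
        using i assms by (simp add: Mmat_def)
    qed
    then show "signof p * (\<Prod>i = 0..<?N. (Mmat xs ys :: 'a mpol mat) $$ (i, p i)) =
      signof p * (if nzp xs ys p then Poly_Mapping.single (monoE (EE xs ys p)) 1 else 0)"
      by (simp add: prod_entries nzp_def)
  qed
qed

lemma lookup_signof_single:
  "Poly_Mapping.lookup ((of_int k :: 'a::comm_ring_1 mpol) * Poly_Mapping.single M 1) m =
   (if M = m then of_int k else 0)"
proof -
  have "(of_int k :: 'a mpol) * Poly_Mapping.single M 1 = Poly_Mapping.single M (of_int k)"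
    by (metis single_of_int mult_single add_0 mult.right_neutral)
  then show ?thesis by (simp add: lookup_single when_def)
qed

lemma lookup_det:
  assumes "sum_list xs = sum_list ys"
  shows "Poly_Mapping.lookup (det (Mmat xs ys :: 'a::comm_ring_1 mpol mat)) m =
    (\<Sum>p\<in>{p. p permutes {0..<sum_list xs}}.
       if nzp xs ys p \<and> monoE (EE xs ys p) = m then of_int (sign p) else 0)"
  unfolding det_expand[OF assms] lookup_sum
  by (rule sum.cong[OF refl]) (auto simp: lookup_signof_single)

lemma keys_det:
  assumes "sum_list xs = sum_list ys"
    and "m \<in> Poly_Mapping.keys (det (Mmat xs ys :: 'a::comm_ring_1 mpol mat))"
  shows "\<exists>p. p permutes {0..<sum_list xs} \<and> nzp xs ys p \<and> m = monoE (EE xs ys p)"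
proof (rule ccontr)
  assume "\<not> ?thesis"
  then have "Poly_Mapping.lookup (det (Mmat xs ys :: 'a mpol mat)) m = 0"
    unfolding lookup_det[OF assms(1)] by (intro sum.neutral) auto
  then show False using assms(2) by (simp add: in_keys_iff)
qed

lemma perm_unique:
  assumes "sum_list xs = sum_list ys"
    and p: "p permutes {0..<sum_list xs}" and q: "q permutes {0..<sum_list xs}"
    and "nzp xs ys p" "nzp xs ys q" and E: "EE xs ys p = EE xs ys q"
  shows "p = q"
proof
  fix a
  show "p a = q a"
  proof (cases "a < sum_list xs")
    case False
    then show ?thesis using p q by (simp add: permutes_def)
  next
    case True
    have pa: "p a < sum_list xs" using p True by (simp add: permutes_in_image)
    have qa: "q a < sum_list xs" using q True by (simp add: permutes_in_image)
    show ?thesis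
    proof (cases "isvar xs ys a (p a)")
      case True
      then have "(a, p a) \<in> EE xs ys q" using E \<open>a < sum_list xs\<close> by (auto simp: Eset_def)
      then show ?thesis by (auto simp: Eset_def)
    next
      case pv: False
      show ?thesis
      proof (cases "isvar xs ys a (q a)")
        case True
        then have "(a, q a) \<in> EE xs ys p" using E \<open>a < sum_list xs\<close> by (auto simp: Eset_def)
        then show ?thesis by (auto simp: Eset_def)
      next
        case False
        then have "isone xs ys a (q a)" "isone xs ys a (p a)"
          using pv assms(4,5) \<open>a < sum_list xs\<close> by (auto simp: nzp_def)
        then show ?thesis using one_unique pa qa assms(1) by metis
      qed
    qed
  qed
qed

lemma lookup_det_sigma:
  assumes "sum_list xs = sum_list ys"
    and s: "\<sigma> permutes {0..<sum_list xs}" and "nzp xs ys \<sigma>"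
  shows "Poly_Mapping.lookup (det (Mmat xs ys :: 'a::field mpol mat)) (monoE (EE xs ys \<sigma>)) \<noteq> 0"
proof -
  let ?P = "{p. p permutes {0..<sum_list xs}}"
  let ?f = "\<lambda>p. if nzp xs ys p \<and> monoE (EE xs ys p) = monoE (EE xs ys \<sigma>) then of_int (sign p) else (0::'a)"
  have fin: "finite ?P" by (simp add: finite_permutations)
  have "sum ?f ?P = ?f \<sigma>"
  proof (rule sum.mono_neutral_right[of ?P "{\<sigma>}", simplified])
    show "finite ?P" by (rule fin)
    show "\<sigma> permutes {0..<sum_list xs}" by (rule s)
    show "\<forall>p\<in>?P - {\<sigma>}. ?f p = 0"
    proof
      fix p assume "p \<in> ?P - {\<sigma>}"
      then have p: "p permutes {0..<sum_list xs}" "p \<noteq> \<sigma>" by auto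
      show "?f p = 0"
      proof (rule ccontr)
        assume "?f p \<noteq> 0"
        then have "nzp xs ys p" "monoE (EE xs ys p) = monoE (EE xs ys \<sigma>)" by (auto split: if_splits)
        then have "EE xs ys p = EE xs ys \<sigma>" by (intro monoE_inj finite_Eset) simp_all
        then have "p = \<sigma>" using perm_unique[OF assms(1) p(1) s] \<open>nzp xs ys p\<close> assms(3) by auto
        then show False using p by simp
      qed
    qed
  qed
  moreover have "?f \<sigma> \<noteq> 0" using assms(3) by (auto simp: sign_def)
  ultimately show ?thesis unfolding lookup_det[OF assms(1)] by simp
qed

lemma top_from_sigma:
  assumes eq: "sum_list xs = sum_list ys"
    and s: "\<sigma> permutes {0..<sum_list xs}" and nz: "nzp xs ys \<sigma>"
    and mx: "\<And>p. p permutes {0..<sum_list xs} \<Longrightarrow> nzp xs ys p \<Longrightarrow>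
       card {a\<in>{0..<sum_list xs}. isvar xs ys a (p a)} \<le> card {a\<in>{0..<sum_list xs}. isvar xs ys a (\<sigma> a)}"
    and a0: "a0 < sum_list xs" "isvar xs ys a0 (\<sigma> a0)"
  shows "appears_in_top (a0, \<sigma> a0) (det (Mmat xs ys :: 'a::field mpol mat))"
proof -
  let ?g = "det (Mmat xs ys :: 'a::field mpol mat)"
  let ?m = "monoE (EE xs ys \<sigma>)"
  let ?d = "card {a\<in>{0..<sum_list xs}. isvar xs ys a (\<sigma> a)}"
  have mk: "?m \<in> Poly_Mapping.keys ?g"
    using lookup_det_sigma[OF eq s nz] by (simp add: in_keys_iff)
  have dm: "mon_deg ?m = ?d" by (simp add: mon_deg_mono finite_Eset card_Eset)
  have le: "mon_deg m \<le> ?d" if mk2: "m \<in> Poly_Mapping.keys ?g" for m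
  proof -
    obtain p where p: "p permutes {0..<sum_list xs}" "nzp xs ys p" "m = monoE (EE xs ys p)"
      using keys_det[OF eq mk2] by blast
    then show ?thesis using mx[OF p(1,2)] by (simp add: mon_deg_mono finite_Eset card_Eset)
  qed
  have td: "total_degree ?g = ?d"
    unfolding total_degree_def
  proof (rule Max_eqI)
    show "finite (insert 0 (mon_deg ` Poly_Mapping.keys ?g))" by simp
    show "?d \<in> insert 0 (mon_deg ` Poly_Mapping.keys ?g)" using mk dm by force
  qed (use le in auto)
  have "?m \<in> top_support ?g" using mk dm td by (simp add: top_support_def)
  moreover have "Poly_Mapping.lookup ?m (a0, \<sigma> a0) > 0"
    using a0 by (simp add: lookup_mono finite_Eset Eset_def)
  ultimately show ?thesis unfolding appears_in_top_def by blast
qed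

lemma pm_plus_eq_zero: "(l::(nat\<times>nat) \<Rightarrow>\<^sub>0 nat) + q = 0 \<Longrightarrow> l = 0"
proof -
  assume h: "l + q = 0"
  show "l = 0"
  proof (rule poly_mapping_eqI)
    fix x
    have "Poly_Mapping.lookup (l + q) x = 0" using h by simp
    then show "Poly_Mapping.lookup l x = Poly_Mapping.lookup 0 x" by (simp add: lookup_add)
  qed
qed

lemma lookup_mult_0: "Poly_Mapping.lookup (f * g :: 'a::comm_ring_1 mpol) 0 =
   Poly_Mapping.lookup f 0 * Poly_Mapping.lookup g 0"
proof -
  have "\<And>l. (\<Sum>q. Poly_Mapping.lookup g q when 0 = l + q) =
      (Poly_Mapping.lookup g 0 when l = 0)"
  proof -
    fix l :: "(nat\<times>nat) \<Rightarrow>\<^sub>0 nat"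
    have e: "(\<lambda>q. Poly_Mapping.lookup g q when 0 = l + q) =
          (\<lambda>q. ((Poly_Mapping.lookup g q when l = 0) when q = 0))"
    proof (rule ext)
      fix q :: "(nat\<times>nat) \<Rightarrow>\<^sub>0 nat"
      show "(Poly_Mapping.lookup g q when 0 = l + q) = ((Poly_Mapping.lookup g q when l = 0) when q = 0)"
      proof (cases "l = 0 \<and> q = 0")
        case True then show ?thesis by simp
      next
        case False
        then have "0 \<noteq> l + q" using pm_plus_eq_zero[of l q] pm_plus_eq_zero[of q l]
          by (metis add.commute)
        then show ?thesis using False by (simp add: when_def)
      qed
    qed
    show "(\<Sum>q. Poly_Mapping.lookup g q when 0 = l + q) = (Poly_Mapping.lookup g 0 when l = 0)"
      unfolding e by (rule Sum_any_when_equal)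
  qed
  then have "Poly_Mapping.lookup (f * g) 0 = (\<Sum>l. (Poly_Mapping.lookup f l * Poly_Mapping.lookup g 0) when l = 0)"
    by (simp add: lookup_mult when_mult mult_when)
  then show ?thesis by simp
qed

lemma epsh_hom: "comm_ring_hom (\<lambda>p::'a::comm_ring_1 mpol. Poly_Mapping.lookup p 0)"
  by unfold_locales (simp_all add: lookup_add lookup_mult_0)

lemma det_zero_row_lemma:
  assumes A: "A \<in> carrier_mat n n" and i: "i < n" and z: "\<And>j. j < n \<Longrightarrow> A $$ (i, j) = 0"
  shows "det A = (0::'a::comm_ring_1)"
  unfolding det_def'[OF A]
proof (rule sum.neutral, rule ballI)
  fix p assume "p \<in> {p. p permutes {0..<n}}"
  then have "p i < n" using i by (simp add: permutes_in_image)
  then have "A $$ (i, p i) = 0" by (rule z)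
  then have "(\<Prod>i = 0..<n. A $$ (i, p i)) = 0" using i by (intro prod_zero) auto
  then show "signof p * (\<Prod>i = 0..<n. A $$ (i, p i)) = 0" by simp
qed

lemma det_zero_col_lemma:
  assumes A: "A \<in> carrier_mat n n" and j: "j < n" and z: "\<And>i. i < n \<Longrightarrow> A $$ (i, j) = 0"
  shows "det A = (0::'a::comm_ring_1)"
proof -
  have "det (transpose_mat A) = 0"
    by (rule det_zero_row_lemma[of _ n j]) (use A j z in auto)
  then show ?thesis using det_transpose[OF A] by simp
qed

lemma unit_eps:
  assumes "(u :: 'a::comm_ring_1 mpol) dvd 1"
  shows "Poly_Mapping.lookup u 0 \<noteq> 0"
proof -
  obtain w where w: "1 = u * w" using assms by (auto elim: dvdE)
  have "Poly_Mapping.lookup (u * w) 0 = 1" unfolding w[symmetric] by simp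
  then have "Poly_Mapping.lookup u 0 * Poly_Mapping.lookup w 0 = 1"
    by (simp add: lookup_mult_0)
  then show ?thesis by auto
qed

lemma eps_Var: "Poly_Mapping.lookup (Var x :: 'a::comm_ring_1 mpol) 0 = 0"
proof -
  have "Poly_Mapping.single x (1::nat) \<noteq> 0"
    by (metis lookup_single_eq lookup_zero one_neq_zero)
  then show ?thesis unfolding Var_def by (simp add: lookup_single when_def)
qed

lemma cb_zero:
  assumes "length ys = n" "\<forall>y\<in>set ys. 0 < y" "1 \<le> n"
  shows "col_block ys 0 = n"
proof (rule cb_eq)
  show "co ys n \<le> 0" using assms by (simp add: co_len)
  have "co ys (n - 1) = co ys n + ys ! (n - 1)" using co_Suc[of "n - 1" ys] assms by simp
  moreover have "ys ! (n - 1) > 0" using assms by (auto simp: nth_mem)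
  ultimately show "0 < co ys (n - 1)" by simp
qed (use assms in auto)

lemma strict_blocks:
  assumes len: "length xs = n" "length ys = n"
    and pos: "\<forall>x\<in>set xs. 0 < x" "\<forall>y\<in>set ys. 0 < y"
    and eq: "sum_list xs = sum_list ys"
    and nz: "det (Mmat xs ys :: 'a::field mpol mat) \<noteq> 0"
    and irr: "irreducible (det (Mmat xs ys :: 'a::field mpol mat))"
    and s: "2 \<le> s" "s \<le> n"
  shows "sum_list xs - ro xs (s - 1) < co ys (s - 2)"
proof (rule ccontr)
  assume neg: "\<not> sum_list xs - ro xs (s - 1) < co ys (s - 2)"
  define N where "N = sum_list xs"
  define k0 where "k0 = ro xs (s - 1)"
  define c where "c = co ys (s - 2)"
  have cle: "c \<le> N - k0" using neg by (simp add: N_def k0_def c_def)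
  have k0N: "k0 \<le> N" unfolding k0_def N_def
    using ro_mono[of "s - 1" n xs] ro_len[of xs n] len s by simp
  have zero: "\<not> isvar xs ys a b \<and> \<not> isone xs ys a b"
    if "a < N" "k0 \<le> a" "b < N" "c \<le> b" for a b
  proof -
    have "s \<le> row_block xs a" using rb_ge[of a xs s] that s by (simp add: N_def k0_def)
    moreover have "\<not> s - 1 \<le> col_block ys b"
      using cb_ge[of b ys "s - 1"] that s eq by (simp add: N_def c_def numeral_2_eq_2)
    ultimately show ?thesis by (auto simp: isvar_def isone_def)
  qed
  show False
  proof (cases "c < N - k0")
    case True
    have "det (Mmat xs ys :: 'a mpol mat) = 0"
      unfolding det_expand[OF eq]
    proof (rule sum.neutral, rule ballI)
      fix p assume "p \<in> {p. p permutes {0..<sum_list xs}}"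
      then have p: "p permutes {0..<N}" by (simp add: N_def)
      have "\<not> nzp xs ys p"
      proof
        assume nzp: "nzp xs ys p"
        have "p ` {k0..<N} \<subseteq> {0..<c}"
        proof
          fix b assume "b \<in> p ` {k0..<N}"
          then obtain a where a: "a \<in> {k0..<N}" "b = p a" by auto
          have "p a < N" using p a by (auto simp: permutes_in_image)
          moreover have "isvar xs ys a (p a) \<or> isone xs ys a (p a)"
            using nzp a by (auto simp: nzp_def N_def)
          ultimately show "b \<in> {0..<c}" using zero[of a "p a"] a by force
        qed
        moreover have "inj_on p {k0..<N}" using permutes_inj[OF p] by (auto intro: inj_on_subset)
        ultimately have "card {k0..<N} \<le> card {0..<c}" by (intro card_inj_on_le) auto
        then show False using True by simp
      qed
      then show "signof p * (if nzp xs ys p then Poly_Mapping.single (monoE (EE xs ys p)) 1 else 0) = 0"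
        by simp
    qed
    then show False using nz by simp
  next
    case False
    then have cN: "c = N - k0" using cle by simp
    let ?M = "Mmat xs ys :: 'a mpol mat"
    have car: "?M \<in> carrier_mat (k0 + c) (k0 + c)"
      using cN k0N eq by (simp add: Mmat_def N_def)
    define B where "B = mat k0 k0 (\<lambda>(i, j). ?M $$ (i, j + c))"
    define X where "X = mat k0 c (\<lambda>(i, j). ?M $$ (i, j))"
    define D where "D = mat c c (\<lambda>(i, j). ?M $$ (i + k0, j))"
    have Mij: "?M $$ (i, j) = Mentry xs ys i j" if "i < N" "j < N" for i j
      using that eq by (simp add: Mmat_def N_def)
    have swap: "mat (k0 + c) (k0 + c) (\<lambda>(i, j). ?M $$ (i, if j < k0 then j + c else j - k0)) =
      four_block_mat B X (0\<^sub>m c k0) D"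
    proof (rule eq_matI)
      fix i j assume ij: "i < dim_row (four_block_mat B X (0\<^sub>m c k0) D)"
        "j < dim_col (four_block_mat B X (0\<^sub>m c k0) D)"
      then have ij': "i < k0 + c" "j < k0 + c" by (simp_all add: B_def D_def)
      show "mat (k0 + c) (k0 + c) (\<lambda>(i, j). ?M $$ (i, if j < k0 then j + c else j - k0)) $$ (i, j) =
        four_block_mat B X (0\<^sub>m c k0) D $$ (i, j)"
      proof (cases "i < k0")
        case True
        then show ?thesis using ij' by (auto simp: B_def X_def D_def)
      next
        case iF: False
        show ?thesis
        proof (cases "j < k0")
          case True
          have "Mentry xs ys i (j + c) = (0 :: 'a mpol)"
            using zero[of i "j + c"] iF True ij' cN k0N by (auto simp: Mentry_cases)
          then show ?thesis using ij' iF True cN k0N by (auto simp: B_def X_def D_def Mij)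
        next
          case False
          then show ?thesis using ij' iF by (auto simp: B_def X_def D_def)
        qed
      qed
    qed (auto simp: B_def D_def)
    have "det ?M = (-1)^(k0 * c) * det (four_block_mat B X (0\<^sub>m c k0) D)"
      using det_swap_cols[OF car] swap by simp
    also have "det (four_block_mat B X (0\<^sub>m c k0) D) = det B * det D"
      by (rule det_four_block_mat_lower_left_zero) (auto simp: B_def X_def D_def)
    finally have fac: "det ?M = ((-1)^(k0 * c) * det B) * det D" by simp
    have hom: "comm_ring_hom (\<lambda>p::'a mpol. Poly_Mapping.lookup p 0)" by (rule epsh_hom)
    have k0pos: "0 < k0"
    proof -
      have "ro xs 0 < ro xs 1" using pos len s by (intro ro_strict) auto
      also have "ro xs 1 \<le> k0" unfolding k0_def using s by (intro ro_mono) auto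
      finally show ?thesis by simp
    qed
    have cpos: "0 < c"
    proof -
      have "co ys (n - 1) = co ys n + ys ! (n - 1)" using co_Suc[of "n - 1" ys] len s by simp
      moreover have "ys ! (n - 1) > 0" using pos len s by (auto simp: nth_mem)
      moreover have "co ys (n - 1) \<le> c" unfolding c_def using s by (intro co_anti) auto
      ultimately show ?thesis by simp
    qed
    have epsB: "Poly_Mapping.lookup (det B) 0 = 0"
    proof -
      have "det (map_mat (\<lambda>p. Poly_Mapping.lookup p 0) B) = (0::'a)"
      proof (rule det_zero_row_lemma[of _ k0 0])
        show "map_mat (\<lambda>p. Poly_Mapping.lookup p 0) B \<in> carrier_mat k0 k0" by (simp add: B_def)
        show "0 < k0" by (rule k0pos)
        fix j assume j: "j < k0"
        have "0 < N" using k0pos k0N by simp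
        moreover have jc: "j + c < N" using j cN k0N by simp
        moreover have "isvar xs ys 0 (j + c)"
        proof -
          have "ro xs 0 < ro xs 1" using pos len s by (intro ro_strict) auto
          then have "row_block xs 0 \<le> 1"
            using rb_ge[of 0 xs 2] \<open>0 < N\<close> by (simp add: N_def)
          moreover have "1 \<le> col_block ys (j + c)" using cb_char[of "j + c" ys] jc eq by (simp add: N_def)
          ultimately show ?thesis by (simp add: isvar_def)
        qed
        ultimately show "map_mat (\<lambda>p. Poly_Mapping.lookup p 0) B $$ (0, j) = 0"
          using j k0pos by (simp add: B_def Mij Mentry_cases eps_Var)
      qed
      then show ?thesis using comm_ring_hom.hom_det[OF hom] by simp
    qed
    have epsD: "Poly_Mapping.lookup (det D) 0 = 0"
    proof -
      have "det (map_mat (\<lambda>p. Poly_Mapping.lookup p 0) D) = (0::'a)"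
      proof (rule det_zero_col_lemma[of _ c 0])
        show "map_mat (\<lambda>p. Poly_Mapping.lookup p 0) D \<in> carrier_mat c c" by (simp add: D_def)
        show "0 < c" by (rule cpos)
        fix i assume i: "i < c"
        have iN: "i + k0 < N" using i cN k0N by simp
        have "isvar xs ys (i + k0) 0"
        proof -
          have "row_block xs (i + k0) \<le> n" using rb_char[of "i + k0" xs] iN len by (simp add: N_def)
          moreover have "col_block ys 0 = n" using cb_zero[of ys n] len pos s by simp
          ultimately show ?thesis by (simp add: isvar_def)
        qed
        then show "map_mat (\<lambda>p. Poly_Mapping.lookup p 0) D $$ (i, 0) = 0"
          using i cpos iN by (simp add: D_def Mij Mentry_cases eps_Var)
      qed
      then show ?thesis using comm_ring_hom.hom_det[OF hom] by simp
    qed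
    from irr fac have "((-1)^(k0 * c) * det B) dvd 1 \<or> det D dvd 1"
      unfolding irreducible_def by blast
    then show False
    proof
      assume "((-1)^(k0 * c) * det B) dvd 1"
      then have "Poly_Mapping.lookup ((-1)^(k0 * c) * det B) 0 \<noteq> 0" by (rule unit_eps)
      then show False by (simp add: lookup_mult_0 epsB)
    next
      assume "det D dvd 1"
      then show False using unit_eps epsD by blast
    qed
  qed
qed

lemma nested_match:
  assumes "finite X" "finite Y" "card X = card Y"
    and "\<And>s. card {x\<in>X. s \<le> g x} \<le> card {y\<in>Y. s \<le> h y}"
  shows "\<exists>\<pi>. bij_betw \<pi> X Y \<and> (\<forall>x\<in>X. (g x::nat) \<le> h (\<pi> x))"
  using assms
proof (induction "card X" arbitrary: X Y)
  case 0
  then have "X = {}" "Y = {}" by auto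
  then have "bij_betw (\<lambda>x. undefined) X Y \<and> (\<forall>x\<in>X. g x \<le> h ((\<lambda>x. undefined) x))" by (simp add: bij_betw_def)
  then show ?case by blast
next
  case (Suc m)
  then have "X \<noteq> {}" by auto
  have fg: "finite (g ` X)" "g ` X \<noteq> {}" using Suc.prems(1) \<open>X \<noteq> {}\<close> by auto
  have "Max (g ` X) \<in> g ` X" using Max_in[OF fg] .
  then obtain x0 where x0a: "x0 \<in> X" "g x0 = Max (g ` X)" by auto
  have x0: "x0 \<in> X" "\<forall>x\<in>X. g x \<le> g x0"
    using x0a Max_ge[OF fg(1)] by auto
  have "x0 \<in> {x\<in>X. g x0 \<le> g x}" using x0 by simp
  then have "card {x\<in>X. g x0 \<le> g x} > 0" using Suc.prems(1)
    by (subst card_gt_0_iff) auto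
  then have "card {y\<in>Y. g x0 \<le> h y} > 0" using Suc.prems(4)[of "g x0"] by linarith
  then have "{y\<in>Y. g x0 \<le> h y} \<noteq> {}" by (metis card.empty less_irrefl)
  then obtain y0 where y0: "y0 \<in> Y" "g x0 \<le> h y0" by blast
  let ?X = "X - {x0}" and ?Y = "Y - {y0}"
  have hall: "card {x\<in>?X. s \<le> g x} \<le> card {y\<in>?Y. s \<le> h y}" for s
  proof (cases "s \<le> g x0")
    case True
    have "{x\<in>?X. s \<le> g x} = {x\<in>X. s \<le> g x} - {x0}" by auto
    moreover have "{y\<in>?Y. s \<le> h y} = {y\<in>Y. s \<le> h y} - {y0}" by auto
    moreover have "x0 \<in> {x\<in>X. s \<le> g x}" using x0 True by auto
    moreover have "y0 \<in> {y\<in>Y. s \<le> h y}" using y0 True by auto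
    ultimately show ?thesis using Suc.prems(1,2) Suc.prems(4)[of s]
      by (simp add: card_Diff_singleton)
  next
    case False
    then have e: "{x\<in>?X. s \<le> g x} = {}" using x0 by force
    show ?thesis unfolding e by simp
  qed
  have "m = card ?X" using Suc.hyps(2) x0 Suc.prems(1) by simp
  moreover have "card ?X = card ?Y" using Suc.prems(1,2,3) x0 y0 by simp
  ultimately obtain \<pi> where pi: "bij_betw \<pi> ?X ?Y" "\<forall>x\<in>?X. g x \<le> h (\<pi> x)"
    using Suc.hyps(1)[of ?X ?Y] Suc.prems(1,2) hall by auto
  let ?p = "\<pi>(x0 := y0)"
  have "bij_betw ?p X Y"
  proof -
    have "bij_betw ?p ?X ?Y" using pi(1) by (rule bij_betw_cong[THEN iffD1, rotated]) auto
    moreover have "bij_betw ?p {x0} {y0}" by (simp add: bij_betw_def)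
    ultimately have "bij_betw ?p (?X \<union> {x0}) (?Y \<union> {y0})"
      by (rule bij_betw_combine) auto
    moreover have "?X \<union> {x0} = X" "?Y \<union> {y0} = Y" using x0 y0 by auto
    ultimately show ?thesis by simp
  qed
  moreover have "\<forall>x\<in>X. g x \<le> h (?p x)" using pi(2) y0 by auto
  ultimately show ?case by blast
qed

definition dd :: "nat list \<Rightarrow> nat list \<Rightarrow> nat \<Rightarrow> nat" where
  "dd xs ys s = (sum_list xs - ro xs (s - 1)) - co ys (s - 1)"

definition Oset :: "nat list \<Rightarrow> nat list \<Rightarrow> (nat \<Rightarrow> nat) \<Rightarrow> nat \<Rightarrow> nat set" where
  "Oset xs ys p s = {a\<in>{0..<sum_list xs}. row_block xs a = s \<and> isone xs ys a (p a)}"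

lemma ones_lower:
  assumes eq: "sum_list xs = sum_list ys"
    and p: "p permutes {0..<sum_list xs}" and nz: "nzp xs ys p" and s: "1 \<le> s"
  shows "dd xs ys s \<le> card (Oset xs ys p s)"
proof -
  let ?N = "sum_list xs"
  let ?T = "{ro xs (s - 1)..<?N}"
  let ?O = "Oset xs ys p s"
  have sub: "p ` (?T - ?O) \<subseteq> {0..<co ys (s - 1)}"
  proof
    fix b assume "b \<in> p ` (?T - ?O)"
    then obtain a where a: "a \<in> ?T" "a \<notin> ?O" "b = p a" by auto
    have aN: "a < ?N" using a by simp
    have sa: "s \<le> row_block xs a" using rb_ge[OF aN s] a by simp
    have pa: "p a < sum_list ys" using p aN eq by (simp add: permutes_in_image)
    have "isvar xs ys a (p a) \<or> isone xs ys a (p a)" using nz aN by (simp add: nzp_def)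
    then have "s \<le> col_block ys (p a)"
    proof
      assume "isvar xs ys a (p a)" then show ?thesis using sa by (simp add: isvar_def)
    next
      assume o: "isone xs ys a (p a)"
      then have "row_block xs a \<noteq> s" using a aN by (auto simp: Oset_def)
      then show ?thesis using o sa by (simp add: isone_def)
    qed
    then show "b \<in> {0..<co ys (s - 1)}" using cb_ge[OF pa s] a by simp
  qed
  have "inj_on p (?T - ?O)" using permutes_inj[OF p] by (auto intro: inj_on_subset)
  then have "card (?T - ?O) \<le> co ys (s - 1)"
    using card_inj_on_le[OF _ sub] by simp
  moreover have "card ?T - card ?O \<le> card (?T - ?O)" by (rule diff_card_le_card_Diff) (simp_all add: Oset_def)
  ultimately show ?thesis unfolding dd_def by simp
qed

lemma var_upper:
  assumes eq: "sum_list xs = sum_list ys"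
    and p: "p permutes {0..<sum_list xs}" and nz: "nzp xs ys p"
  shows "card {a\<in>{0..<sum_list xs}. isvar xs ys a (p a)} + (\<Sum>s\<in>{2..n}. dd xs ys s) \<le> sum_list xs"
proof -
  let ?N = "sum_list xs"
  let ?V = "{a\<in>{0..<?N}. isvar xs ys a (p a)}"
  let ?U = "\<Union>s\<in>{2..n}. Oset xs ys p s"
  have "(\<Sum>s\<in>{2..n}. dd xs ys s) \<le> (\<Sum>s\<in>{2..n}. card (Oset xs ys p s))"
    by (rule sum_mono) (use ones_lower[OF eq p nz] in auto)
  also have "\<dots> = card ?U"
    by (rule card_UN_disjoint[symmetric]) (auto simp: Oset_def)
  finally have 1: "(\<Sum>s\<in>{2..n}. dd xs ys s) \<le> card ?U" .
  have "card ?V + card ?U = card (?V \<union> ?U)"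
    by (rule card_Un_disjoint[symmetric]) (auto simp: Oset_def dest: one_not_var)
  also have "\<dots> \<le> card {0..<?N}" by (rule card_mono) (auto simp: Oset_def)
  finally show ?thesis using 1 by simp
qed

definition fb :: "nat list \<Rightarrow> nat list \<Rightarrow> nat \<Rightarrow> nat \<Rightarrow> nat \<Rightarrow> nat \<Rightarrow> nat" where
  "fb xs ys a0 b0 k s = (if s = k then a0 - ro xs (k - 1) else if s = Suc k then b0 - co ys k else dd xs ys s)"

definition Lset :: "nat list \<Rightarrow> nat list \<Rightarrow> nat \<Rightarrow> nat \<Rightarrow> nat \<Rightarrow> nat \<Rightarrow> nat set" where
  "Lset xs ys a0 b0 k s = (if fb xs ys a0 b0 k s < dd xs ys s
      then {0..dd xs ys s} - {fb xs ys a0 b0 k s} else {0..<dd xs ys s})"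

lemma Lset_props:
  "card (Lset xs ys a0 b0 k s) = dd xs ys s"
  "fb xs ys a0 b0 k s \<notin> Lset xs ys a0 b0 k s"
  "l \<in> Lset xs ys a0 b0 k s \<Longrightarrow> l \<le> dd xs ys s"
  "finite (Lset xs ys a0 b0 k s)"
  unfolding Lset_def by (auto split: if_splits)

context
  fixes xs ys :: "nat list" and n k a0 b0 :: nat
  assumes len: "length xs = n" "length ys = n"
    and pos: "\<forall>x\<in>set xs. 0 < x" "\<forall>y\<in>set ys. 0 < y"
    and eq: "sum_list xs = sum_list ys"
    and strict: "\<And>s. 2 \<le> s \<Longrightarrow> s \<le> n \<Longrightarrow> sum_list xs - ro xs (s - 1) < co ys (s - 2)"
    and a0: "a0 < sum_list xs" "row_block xs a0 = k"
    and b0: "b0 < sum_list ys" "col_block ys b0 = k"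
begin

abbreviation "N \<equiv> sum_list xs"
abbreviation "L \<equiv> Lset xs ys a0 b0 k"
definition "ORt s = (\<lambda>l. ro xs (s - 1) + l) ` L s"
definition "OCt s = (\<lambda>l. co ys (s - 1) + l) ` L s"
definition "ORs = (\<Union>s\<in>{2..n}. ORt s)"
definition "OCs = (\<Union>s\<in>{2..n}. OCt s)"
definition "phi x = x - ro xs (row_block xs x - 1) + co ys (row_block xs x - 1)"

lemma dd_lt:
  assumes "2 \<le> s" "s \<le> n"
  shows "dd xs ys s < xs ! (s - 1)" "dd xs ys s < ys ! (s - 2)"
proof -
  have cs: "co ys (s - 2) = co ys (s - 1) + ys ! (s - 2)"
    using co_Suc[of "s - 2" ys] len assms by (simp add: Suc_diff_Suc numeral_2_eq_2)
  have ypos: "ys ! (s - 2) > 0" using pos len assms by (auto simp: nth_mem)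
  have xpos: "xs ! (s - 1) > 0" using pos len assms by (auto simp: nth_mem)
  show "dd xs ys s < ys ! (s - 2)"
    using strict[OF assms] cs ypos unfolding dd_def by linarith
  have rs: "ro xs s = ro xs (s - 1) + xs ! (s - 1)"
    using ro_Suc[of "s - 1" xs] len assms by simp
  show "dd xs ys s < xs ! (s - 1)"
  proof (cases "s < n")
    case True
    have "N - ro xs s < co ys (s - 1)" using strict[of "Suc s"] True assms by simp
    then show ?thesis using rs xpos unfolding dd_def by linarith
  next
    case False
    then have "s = n" using assms by simp
    then have "ro xs s = N" using ro_len[of xs s] len by simp
    moreover have "co ys (s - 1) > 0"
      using co_Suc[of "s - 1" ys] co_len[of ys s] len assms \<open>s = n\<close> pos by (auto simp: nth_mem)
    ultimately show ?thesis using rs xpos unfolding dd_def by linarith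
  qed
qed

lemma row_local:
  assumes "1 \<le> s" "s \<le> n" "l < xs ! (s - 1)"
  shows "row_block xs (ro xs (s - 1) + l) = s" "ro xs (s - 1) + l < N"
proof -
  have rs: "ro xs s = ro xs (s - 1) + xs ! (s - 1)"
    using ro_Suc[of "s - 1" xs] len assms by simp
  show "row_block xs (ro xs (s - 1) + l) = s"
    by (rule rb_eq) (use assms rs len in auto)
  have "ro xs s \<le> N" using ro_mono[of s n xs] ro_len[of xs n] len assms by simp
  then show "ro xs (s - 1) + l < N" using rs assms by simp
qed

lemma col_local:
  assumes "2 \<le> s" "s \<le> n" "l < ys ! (s - 2)"
  shows "col_block ys (co ys (s - 1) + l) = s - 1" "co ys (s - 1) + l < N"
proof -
  have cs: "co ys (s - 2) = co ys (s - 1) + ys ! (s - 2)"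
    using co_Suc[of "s - 2" ys] len assms by (simp add: Suc_diff_Suc numeral_2_eq_2)
  show "col_block ys (co ys (s - 1) + l) = s - 1"
    by (rule cb_eq) (use assms cs len in \<open>auto simp: numeral_2_eq_2\<close>)
  have "co ys (s - 2) \<le> N" using co_anti[of 0 "s - 2" ys] eq by simp
  then show "co ys (s - 1) + l < N" using cs assms by simp
qed

lemma ORt_props:
  assumes s: "2 \<le> s" "s \<le> n" and x: "x \<in> ORt s"
  shows "x < N" "row_block xs x = s" "phi x \<in> OCt s" "phi x < N"
    "col_block ys (phi x) = s - 1" "isone xs ys x (phi x)"
proof -
  obtain l where l: "l \<in> L s" "x = ro xs (s - 1) + l" using x by (auto simp: ORt_def)
  have lx: "l < xs ! (s - 1)" "l < ys ! (s - 2)"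
    using Lset_props(3)[OF l(1)] dd_lt[OF s] by auto
  show "x < N" "row_block xs x = s" using row_local[of s l] lx s l by auto
  then have px: "phi x = co ys (s - 1) + l" using l by (simp add: phi_def)
  then show "phi x \<in> OCt s" using l by (auto simp: OCt_def)
  show "phi x < N" "col_block ys (phi x) = s - 1" using col_local[of s l] px lx s by auto
  then show "isone xs ys x (phi x)"
    using s \<open>row_block xs x = s\<close> px l by (simp add: isone_def)
qed

lemma OCt_props:
  assumes s: "2 \<le> s" "s \<le> n" and y: "y \<in> OCt s"
  shows "y < N" "col_block ys y = s - 1"
proof -
  obtain l where l: "l \<in> L s" "y = co ys (s - 1) + l" using y by (auto simp: OCt_def)
  have lx: "l < ys ! (s - 2)" using Lset_props(3)[OF l(1)] dd_lt[OF s] by auto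
  show "y < N" "col_block ys y = s - 1" using col_local[of s l] lx s l by auto
qed

lemma card_ORt: "card (ORt s) = dd xs ys s"
  unfolding ORt_def by (subst card_image) (auto simp: Lset_props)

lemma card_OCt: "card (OCt s) = dd xs ys s"
  unfolding OCt_def by (subst card_image) (auto simp: Lset_props)

lemma finite_ORt: "finite (ORt s)" unfolding ORt_def by (simp add: Lset_props)
lemma finite_OCt: "finite (OCt s)" unfolding OCt_def by (simp add: Lset_props)

lemma phi_image: "2 \<le> s \<Longrightarrow> s \<le> n \<Longrightarrow> phi ` ORt s = OCt s"
proof -
  assume s: "2 \<le> s" "s \<le> n"
  show "phi ` ORt s = OCt s"
  proof
    show "phi ` ORt s \<subseteq> OCt s" using ORt_props[OF s] by auto
    show "OCt s \<subseteq> phi ` ORt s"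
    proof
      fix y assume "y \<in> OCt s"
      then obtain l where l: "l \<in> L s" "y = co ys (s - 1) + l" by (auto simp: OCt_def)
      have x: "ro xs (s - 1) + l \<in> ORt s" using l by (auto simp: ORt_def)
      have "row_block xs (ro xs (s - 1) + l) = s" using ORt_props(2)[OF s x] .
      then have "phi (ro xs (s - 1) + l) = y" using l by (simp add: phi_def)
      then show "y \<in> phi ` ORt s" using x by force
    qed
  qed
qed

lemma phi_OR: "phi ` ORs = OCs"
  unfolding ORs_def OCs_def image_UN using phi_image by auto

lemma phi_inj: "inj_on phi ORs"
proof
  fix x x' assume x: "x \<in> ORs" and x': "x' \<in> ORs" and e: "phi x = phi x'"
  obtain s where s: "s \<in> {2..n}" "x \<in> ORt s" using x by (auto simp: ORs_def)
  obtain s' where s': "s' \<in> {2..n}" "x' \<in> ORt s'" using x' by (auto simp: ORs_def)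
  have "s - 1 = s' - 1" using ORt_props(5)[of s x] ORt_props(5)[of s' x'] s s' e by auto
  then have "s = s'" using s s' by auto
  obtain l where l: "x = ro xs (s - 1) + l" using s by (auto simp: ORt_def)
  obtain l' where l': "x' = ro xs (s - 1) + l'" using s' \<open>s = s'\<close> by (auto simp: ORt_def)
  have "phi x = co ys (s - 1) + l" using ORt_props(2)[of s x] s l by (simp add: phi_def)
  moreover have "phi x' = co ys (s - 1) + l'"
    using ORt_props(2)[of s' x'] s' l' \<open>s = s'\<close> by (simp add: phi_def)
  ultimately show "x = x'" using e l l' by simp
qed

lemma a0_notin: "a0 \<notin> ORs"
proof
  assume "a0 \<in> ORs"
  then obtain s where s: "2 \<le> s" "s \<le> n" "a0 \<in> ORt s" by (auto simp: ORs_def)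
  then have "s = k" using ORt_props(2)[of s a0] a0 by simp
  obtain l where l: "l \<in> L s" "a0 = ro xs (s - 1) + l" using s by (auto simp: ORt_def)
  have "fb xs ys a0 b0 k s = l" using l \<open>s = k\<close> by (simp add: fb_def)
  then show False using Lset_props(2) l by metis
qed

lemma b0_notin: "b0 \<notin> OCs"
proof
  assume "b0 \<in> OCs"
  then obtain s where s: "2 \<le> s" "s \<le> n" "b0 \<in> OCt s" by (auto simp: OCs_def)
  then have "s = Suc k" using OCt_props(2)[of s b0] b0 by simp
  obtain l where l: "l \<in> L s" "b0 = co ys (s - 1) + l" using s by (auto simp: OCt_def)
  have "fb xs ys a0 b0 k s = l" using l \<open>s = Suc k\<close> by (simp add: fb_def)
  then show False using Lset_props(2) l by metis
qed


definition "FR = {0..<N} - ORs - {a0}"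
definition "FC = {0..<N} - OCs - {b0}"

lemma ORs_sub: "ORs \<subseteq> {0..<N}" using ORt_props(1) by (auto simp: ORs_def)
lemma OCs_sub: "OCs \<subseteq> {0..<N}" using OCt_props(1) by (auto simp: OCs_def)
lemma finite_ORs: "finite ORs" by (simp add: ORs_def finite_ORt)
lemma finite_OCs: "finite OCs" by (simp add: OCs_def finite_OCt)

lemma card_OR_ge: "card {x\<in>ORs. s' \<le> row_block xs x} = (\<Sum>t\<in>{t\<in>{2..n}. s' \<le> t}. dd xs ys t)"
proof -
  have "{x\<in>ORs. s' \<le> row_block xs x} = (\<Union>t\<in>{t\<in>{2..n}. s' \<le> t}. ORt t)"
  proof (intro equalityI subsetI)
    fix x assume "x \<in> {x\<in>ORs. s' \<le> row_block xs x}"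
    then obtain t where t: "t \<in> {2..n}" "x \<in> ORt t" "s' \<le> row_block xs x" by (auto simp: ORs_def)
    then have "row_block xs x = t" using ORt_props(2) by auto
    then show "x \<in> (\<Union>t\<in>{t\<in>{2..n}. s' \<le> t}. ORt t)" using t by auto
  next
    fix x assume "x \<in> (\<Union>t\<in>{t\<in>{2..n}. s' \<le> t}. ORt t)"
    then obtain t where t: "t \<in> {2..n}" "x \<in> ORt t" "s' \<le> t" by auto
    then have "row_block xs x = t" using ORt_props(2) by auto
    then show "x \<in> {x\<in>ORs. s' \<le> row_block xs x}" using t by (auto simp: ORs_def)
  qed
  moreover have "card (\<Union>t\<in>{t\<in>{2..n}. s' \<le> t}. ORt t) = (\<Sum>t\<in>{t\<in>{2..n}. s' \<le> t}. card (ORt t))"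
  proof (rule card_UN_disjoint)
    show "\<forall>i\<in>{t\<in>{2..n}. s' \<le> t}. \<forall>j\<in>{t\<in>{2..n}. s' \<le> t}. i \<noteq> j \<longrightarrow> ORt i \<inter> ORt j = {}"
    proof (intro ballI impI)
      fix i j assume i: "i \<in> {t\<in>{2..n}. s' \<le> t}" and j: "j \<in> {t\<in>{2..n}. s' \<le> t}" and ij: "i \<noteq> j"
      show "ORt i \<inter> ORt j = {}"
      proof (rule ccontr)
        assume "ORt i \<inter> ORt j \<noteq> {}"
        then obtain y where "y \<in> ORt i" "y \<in> ORt j" by auto
        then have "i = j" using ORt_props(2)[of i y] ORt_props(2)[of j y] i j by auto
        then show False using ij by auto
      qed
    qed
  qed (auto simp: finite_ORt)
  ultimately show ?thesis by (simp add: card_ORt)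
qed

lemma card_OC_ge: "card {y\<in>OCs. s' \<le> col_block ys y} = (\<Sum>t\<in>{t\<in>{2..n}. s' \<le> t - 1}. dd xs ys t)"
proof -
  have "{y\<in>OCs. s' \<le> col_block ys y} = (\<Union>t\<in>{t\<in>{2..n}. s' \<le> t - 1}. OCt t)"
  proof (intro equalityI subsetI)
    fix x assume "x \<in> {y\<in>OCs. s' \<le> col_block ys y}"
    then obtain t where t: "t \<in> {2..n}" "x \<in> OCt t" "s' \<le> col_block ys x" by (auto simp: OCs_def)
    then have "col_block ys x = t - 1" using OCt_props(2) by auto
    then show "x \<in> (\<Union>t\<in>{t\<in>{2..n}. s' \<le> t - 1}. OCt t)" using t by auto
  next
    fix x assume "x \<in> (\<Union>t\<in>{t\<in>{2..n}. s' \<le> t - 1}. OCt t)"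
    then obtain t where t: "t \<in> {2..n}" "x \<in> OCt t" "s' \<le> t - 1" by auto
    then have "col_block ys x = t - 1" using OCt_props(2) by auto
    then show "x \<in> {y\<in>OCs. s' \<le> col_block ys y}" using t by (auto simp: OCs_def)
  qed
  moreover have "card (\<Union>t\<in>{t\<in>{2..n}. s' \<le> t - 1}. OCt t) = (\<Sum>t\<in>{t\<in>{2..n}. s' \<le> t - 1}. card (OCt t))"
  proof (rule card_UN_disjoint)
    show "\<forall>i\<in>{t\<in>{2..n}. s' \<le> t - 1}. \<forall>j\<in>{t\<in>{2..n}. s' \<le> t - 1}. i \<noteq> j \<longrightarrow> OCt i \<inter> OCt j = {}"
    proof (intro ballI impI)
      fix i j assume i: "i \<in> {t\<in>{2..n}. s' \<le> t - 1}" and j: "j \<in> {t\<in>{2..n}. s' \<le> t - 1}" and ij: "i \<noteq> j"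
      show "OCt i \<inter> OCt j = {}"
      proof (rule ccontr)
        assume "OCt i \<inter> OCt j \<noteq> {}"
        then obtain y where "y \<in> OCt i" "y \<in> OCt j" by auto
        then have "i - 1 = j - 1" using OCt_props(2)[of i y] OCt_props(2)[of j y] i j by auto
        then show False using i j ij by auto
      qed
    qed
  qed (auto simp: finite_OCt)
  ultimately show ?thesis by (simp add: card_OCt)
qed

lemma count_rows: "card {x\<in>FR. s' \<le> row_block xs x} + card {x\<in>ORs. s' \<le> row_block xs x}
   + (if s' \<le> k then 1 else 0) = card {x\<in>{0..<N}. s' \<le> row_block xs x}"
proof -
  let ?A = "{x\<in>FR. s' \<le> row_block xs x}" and ?B = "{x\<in>ORs. s' \<le> row_block xs x}"
    and ?C = "if s' \<le> k then {a0} else {}"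
  have U: "{x\<in>{0..<N}. s' \<le> row_block xs x} = (?A \<union> ?B) \<union> ?C"
    using ORs_sub a0 by (auto simp: FR_def)
  have fA: "finite ?A" by (simp add: FR_def)
  have fB: "finite ?B" using finite_ORs by simp
  have "card ((?A \<union> ?B) \<union> ?C) = card (?A \<union> ?B) + card ?C"
    by (rule card_Un_disjoint) (use fA fB a0_notin in \<open>auto simp: FR_def\<close>)
  moreover have "card (?A \<union> ?B) = card ?A + card ?B"
    by (rule card_Un_disjoint) (use fA fB in \<open>auto simp: FR_def\<close>)
  ultimately show ?thesis unfolding U by simp
qed

lemma count_cols: "card {y\<in>FC. s' \<le> col_block ys y} + card {y\<in>OCs. s' \<le> col_block ys y}
   + (if s' \<le> k then 1 else 0) = card {y\<in>{0..<N}. s' \<le> col_block ys y}"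
proof -
  let ?A = "{y\<in>FC. s' \<le> col_block ys y}" and ?B = "{y\<in>OCs. s' \<le> col_block ys y}"
    and ?C = "if s' \<le> k then {b0} else {}"
  have U: "{y\<in>{0..<N}. s' \<le> col_block ys y} = (?A \<union> ?B) \<union> ?C"
    using OCs_sub b0 eq by (auto simp: FC_def)
  have fA: "finite ?A" by (simp add: FC_def)
  have fB: "finite ?B" using finite_OCs by simp
  have "card ((?A \<union> ?B) \<union> ?C) = card (?A \<union> ?B) + card ?C"
    by (rule card_Un_disjoint) (use fA fB b0_notin in \<open>auto simp: FC_def\<close>)
  moreover have "card (?A \<union> ?B) = card ?A + card ?B"
    by (rule card_Un_disjoint) (use fA fB in \<open>auto simp: FC_def\<close>)
  ultimately show ?thesis unfolding U by simp
qed

lemma card_U: "1 \<le> s' \<Longrightarrow> card {x\<in>{0..<N}. s' \<le> row_block xs x} = N - ro xs (s' - 1)"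
proof -
  assume s: "1 \<le> s'"
  have "{x\<in>{0..<N}. s' \<le> row_block xs x} = {ro xs (s' - 1)..<N}"
  proof (intro equalityI subsetI)
    fix x assume x: "x \<in> {x\<in>{0..<N}. s' \<le> row_block xs x}"
    then have "x < N" by simp
    then show "x \<in> {ro xs (s' - 1)..<N}" using rb_ge[OF \<open>x < N\<close> s] x by simp
  next
    fix x assume x: "x \<in> {ro xs (s' - 1)..<N}"
    then have "x < N" by simp
    then show "x \<in> {x\<in>{0..<N}. s' \<le> row_block xs x}" using rb_ge[OF \<open>x < N\<close> s] x by simp
  qed
  then show ?thesis by simp
qed

lemma card_V: "1 \<le> s' \<Longrightarrow> card {y\<in>{0..<N}. s' \<le> col_block ys y} = co ys (s' - 1)"
proof -
  assume s: "1 \<le> s'"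
  have cN: "co ys (s' - 1) \<le> N" using co_anti[of 0 "s' - 1" ys] eq by simp
  have "{y\<in>{0..<N}. s' \<le> col_block ys y} = {0..<co ys (s' - 1)}"
  proof (intro equalityI subsetI)
    fix y assume y: "y \<in> {y\<in>{0..<N}. s' \<le> col_block ys y}"
    then have yN: "y < sum_list ys" using eq by simp
    have "(s' \<le> col_block ys y) = (y < co ys (s' - 1))" by (rule cb_ge[OF yN s])
    then show "y \<in> {0..<co ys (s' - 1)}" using y by simp
  next
    fix y assume y: "y \<in> {0..<co ys (s' - 1)}"
    then have yN: "y < sum_list ys" using eq cN by simp
    have "(s' \<le> col_block ys y) = (y < co ys (s' - 1))" by (rule cb_ge[OF yN s])
    then show "y \<in> {y\<in>{0..<N}. s' \<le> col_block ys y}" using y yN eq by simp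
  qed
  then show ?thesis by simp
qed

lemma all_rows: "{x\<in>{0..<N}. 0 \<le> row_block xs x} = {x\<in>{0..<N}. 1 \<le> row_block xs x}"
proof (intro Collect_cong conj_cong refl)
  fix x assume "x \<in> {0..<N}"
  then have "x < N" by simp
  then show "(0 \<le> row_block xs x) = (1 \<le> row_block xs x)" using rb_char[of x xs] by simp
qed
lemma all_cols: "{y\<in>{0..<N}. 0 \<le> col_block ys y} = {y\<in>{0..<N}. 1 \<le> col_block ys y}"
proof (intro Collect_cong conj_cong refl)
  fix x assume "x \<in> {0..<N}"
  then have "x < sum_list ys" using eq by simp
  then show "(0 \<le> col_block ys x) = (1 \<le> col_block ys x)" using cb_char[of x ys] by simp
qed

lemma hall: "card {x\<in>FR. s' \<le> row_block xs x} \<le> card {y\<in>FC. s' \<le> col_block ys y}"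
proof -
  note r = count_rows[of s'] and c = count_cols[of s']
  note a1 = card_OR_ge[of s'] and a2 = card_OC_ge[of s']
  show ?thesis
  proof (cases "s' \<le> 1")
    case True
    have "{t\<in>{2..n}. s' \<le> t} = {t\<in>{2..n}. s' \<le> t - 1}" using True by auto
    moreover have "card {x\<in>{0..<N}. s' \<le> row_block xs x} = card {y\<in>{0..<N}. s' \<le> col_block ys y}"
    proof (cases "s' = 0")
      case True
      then show ?thesis using card_U[of 1] card_V[of 1] all_rows all_cols eq by simp
    next
      case False
      then have "s' = 1" using \<open>s' \<le> 1\<close> by simp
      then show ?thesis using card_U[of 1] card_V[of 1] eq by simp
    qed
    ultimately show ?thesis using r c a1 a2 by simp
  next
    case False
    show ?thesis
    proof (cases "s' \<le> n")
      case True
      have split: "{t\<in>{2..n}. s' \<le> t} = insert s' {t\<in>{2..n}. s' \<le> t - 1}" using True False by auto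
      have "(\<Sum>t\<in>{t\<in>{2..n}. s' \<le> t}. dd xs ys t) = dd xs ys s' + (\<Sum>t\<in>{t\<in>{2..n}. s' \<le> t - 1}. dd xs ys t)"
        unfolding split by (subst sum.insert) auto
      moreover have "card {x\<in>{0..<N}. s' \<le> row_block xs x} \<le> card {y\<in>{0..<N}. s' \<le> col_block ys y} + dd xs ys s'"
        using card_U[of s'] card_V[of s'] False by (simp add: dd_def)
      ultimately show ?thesis using r c a1 a2 by linarith
    next
      case nF: False
      have "ro xs (s' - 1) = N" using ro_len[of xs "s' - 1"] len nF by simp
      then have "card {x\<in>{0..<N}. s' \<le> row_block xs x} = 0" using card_U[of s'] False by simp
      then show ?thesis using r by linarith
    qed
  qed
qed

lemma card_FR_FC: "card FR = card FC"
proof -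
  note r = count_rows[of 0] and c = count_cols[of 0]
  have "card {x\<in>{0..<N}. 0 \<le> row_block xs x} = N" using card_U[of 1] all_rows by simp
  moreover have "card {y\<in>{0..<N}. 0 \<le> col_block ys y} = N" using card_V[of 1] all_cols eq by simp
  moreover have "card {x\<in>ORs. 0 \<le> row_block xs x} = card {y\<in>OCs. 0 \<le> col_block ys y}"
    using card_OR_ge[of 0] card_OC_ge[of 0] by simp
  ultimately show ?thesis using r c by simp
qed

lemma x_in_OR_one: "x \<in> ORs \<Longrightarrow> isone xs ys x (phi x)"
  using ORt_props(6) by (auto simp: ORs_def)

lemma card_ORs: "card ORs = (\<Sum>t\<in>{2..n}. dd xs ys t)"
proof -
  have "{x\<in>ORs. 0 \<le> row_block xs x} = ORs" by simp
  moreover have "{t\<in>{2..n}. (0::nat) \<le> t} = {2..n}" by auto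
  ultimately show ?thesis using card_OR_ge[of 0] by simp
qed

lemma main_ctx: "appears_in_top (a0, b0) (det (Mmat xs ys :: 'a::field mpol mat))"
proof -
  obtain \<pi> where pi: "bij_betw \<pi> FR FC" "\<forall>x\<in>FR. row_block xs x \<le> col_block ys (\<pi> x)"
    using nested_match[of FR FC "row_block xs" "col_block ys"] card_FR_FC hall
    by (auto simp: FR_def FC_def)
  define \<sigma> where "\<sigma> x = (if x < N then (if x = a0 then b0 else if x \<in> ORs then phi x else \<pi> x) else x)" for x
  have sa0: "\<sigma> a0 = b0" using a0 by (simp add: \<sigma>_def)
  have b1: "bij_betw \<sigma> {a0} {b0}" using sa0 by (simp add: bij_betw_def)
  have "bij_betw phi ORs OCs" using phi_inj phi_OR by (simp add: bij_betw_def)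
  moreover have "\<And>x. x \<in> ORs \<Longrightarrow> \<sigma> x = phi x"
    using ORs_sub a0_notin by (auto simp: \<sigma>_def)
  ultimately have b2: "bij_betw \<sigma> ORs OCs" using bij_betw_cong by metis
  have "\<And>x. x \<in> FR \<Longrightarrow> \<sigma> x = \<pi> x" by (auto simp: \<sigma>_def FR_def)
  then have b3: "bij_betw \<sigma> FR FC" using pi(1) bij_betw_cong by metis
  have "bij_betw \<sigma> ({a0} \<union> ORs) ({b0} \<union> OCs)"
    by (rule bij_betw_combine[OF b1 b2]) (use b0_notin in auto)
  then have "bij_betw \<sigma> (({a0} \<union> ORs) \<union> FR) (({b0} \<union> OCs) \<union> FC)"
    by (rule bij_betw_combine[OF _ b3]) (auto simp: FC_def)
  moreover have "({a0} \<union> ORs) \<union> FR = {0..<N}" using ORs_sub a0 by (auto simp: FR_def)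
  moreover have "({b0} \<union> OCs) \<union> FC = {0..<N}" using OCs_sub b0 eq by (auto simp: FC_def)
  ultimately have bij: "bij_betw \<sigma> {0..<N} {0..<N}" by simp
  have perm: "\<sigma> permutes {0..<N}"
    by (rule bij_imp_permutes[OF bij]) (simp add: \<sigma>_def)
  have var_a0: "isvar xs ys a0 b0" using a0 b0 by (simp add: isvar_def)
  have cls: "isvar xs ys a (\<sigma> a) \<longleftrightarrow> a \<notin> ORs" if a: "a < N" for a
  proof (cases "a = a0")
    case True then show ?thesis using sa0 var_a0 a0_notin by simp
  next
    case False
    show ?thesis
    proof (cases "a \<in> ORs")
      case True
      then show ?thesis using x_in_OR_one[OF True] one_not_var a False by (simp add: \<sigma>_def)
    next
      case nO: False
      then have "a \<in> FR" using a False by (simp add: FR_def)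
      then show ?thesis using pi(2) a False nO by (simp add: \<sigma>_def isvar_def)
    qed
  qed
  have nz: "nzp xs ys \<sigma>"
    unfolding nzp_def
  proof
    fix a assume "a \<in> {0..<N}"
    then have a: "a < N" by simp
    show "isvar xs ys a (\<sigma> a) \<or> isone xs ys a (\<sigma> a)"
    proof (cases "a \<in> ORs")
      case True
      then have "a \<noteq> a0" using a0_notin by auto
      then show ?thesis using x_in_OR_one[OF True] a True by (simp add: \<sigma>_def)
    next
      case False then show ?thesis using cls[OF a] by simp
    qed
  qed
  have cv: "card {a\<in>{0..<N}. isvar xs ys a (\<sigma> a)} = N - (\<Sum>t\<in>{2..n}. dd xs ys t)"
  proof -
    have "{a\<in>{0..<N}. isvar xs ys a (\<sigma> a)} = {0..<N} - ORs" using cls by auto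
    then show ?thesis using card_ORs ORs_sub finite_ORs by (simp add: card_Diff_subset)
  qed
  have mx: "card {a\<in>{0..<N}. isvar xs ys a (p a)} \<le> card {a\<in>{0..<N}. isvar xs ys a (\<sigma> a)}"
    if "p permutes {0..<N}" "nzp xs ys p" for p
    using var_upper[OF eq that, of n] cv by simp
  have "appears_in_top (a0, \<sigma> a0) (det (Mmat xs ys :: 'a::field mpol mat))"
    by (rule top_from_sigma[OF eq perm nz mx]) (use a0 sa0 var_a0 in auto)
  then show ?thesis using sa0 by simp
qed

end

theorem corollary6p5:
  fixes "is" js :: "nat list" and r :: nat
  assumes "length is = r" and "length js = r"
    and "\<forall>x\<in>set is. 0 < x" and "\<forall>x\<in>set js. 0 < x"
    and "sum_list is = sum_list js"
    and "det (Mmat is js :: 'a::field mpol mat) \<noteq> 0"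
    and "irreducible (det (Mmat is js :: 'a::field mpol mat))"
  shows "\<forall>k\<in>{1..r}. \<forall>a b. a < sum_list is \<and> b < sum_list js \<and>
           row_block is a = k \<and> col_block js b = k \<longrightarrow>
           appears_in_top (a, b) (det (Mmat is js :: 'a mpol mat))"
proof (intro ballI allI impI)
  fix k a b
  assume h: "a < sum_list is \<and> b < sum_list js \<and> row_block is a = k \<and> col_block js b = k"
  have strict: "\<And>s. 2 \<le> s \<Longrightarrow> s \<le> r \<Longrightarrow> sum_list is - ro is (s - 1) < co js (s - 2)"
    using strict_blocks[OF assms(1-7)] by blast
  show "appears_in_top (a, b) (det (Mmat is js :: 'a mpol mat))"
    by (rule main_ctx[OF assms(1-5) strict]) (use h in auto)
qed

end
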